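(* Let $SI$, $UI$, $CI$ be a nonnegative bivariate information decomposition, let $\overline{SI}(S;X_1,X_2):=\sup_{f} SI(f(S);X_1,X_2)$ (supremum over all functions $f$ from the alphabet of $S$ to an arbitrary finite set), and define $\overline{UI}^*(S;X_1\setminus X_2):=I(S;X_1)-\overline{SI}(S;X_1,X_2)$ and $\overline{UI}^*(S;X_2\setminus X_1):=I(S;X_2)-\overline{SI}(S;X_1,X_2)$. If $UI$ has the Blackwell property, then $\overline{UI}^*$ does not have the Blackwell property.
   Context: All random variables have finite alphabets. A nonnegative bivariate information decomposition consists of nonnegative functions $SI(S;X_1,X_2)$, $UI(S;X_1\setminus X_2)$, $UI(S;X_2\setminus X_1)$, $CI(S;X_1,X_2)$, defined for every joint distribution of $(S,X_1,X_2)$ with arbitrary finite alphabets and depending continuously on it, such that $I(S;X_1X_2)=SI(S;X_1,X_2)+CI(S;X_1,X_2)+UI(S;X_1\setminus X_2)+UI(S;X_2\setminus X_1)$, $I(S;X_1)=SI(S;X_1,X_2)+UI(S;X_1\setminus X_2)$ and $I(S;X_2)=SI(S;X_1,X_2)+UI(S;X_2\setminus X_1)$, where $I$ denotes mutual information. A unique-information measure $U$ has the Blackwell property if for every joint distribution $P_{SX_1X_2}$ (with finite alphabets): $U(S;X_1\setminus X_2)=0$ if and only if there exists a random variable $X_1'$ such that $S - X_2 - X_1'$ is a Markov chain and $P_{SX_1'}=P_{SX_1}$ (i.e. the channel $S\to X_1$ is a garbling of the channel $S\to X_2$). *)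

theory Defs
  imports "HOL-Probability.Probability"
begin

text \<open>Joint distributions of (S, X1, X2). Arbitrary finite alphabets are encoded as
  finite subsets of nat: a joint distribution is a pmf on nat x nat x nat with finite support.\<close>

type_synonym dist3 = "(nat \<times> nat \<times> nat) pmf"

definition fin_dist :: "'a pmf \<Rightarrow> bool" where
  "fin_dist P \<longleftrightarrow> finite (set_pmf P)"

definition mi :: "('a \<times> 'b) pmf \<Rightarrow> real" where
  "mi P = (\<Sum>z\<in>set_pmf P. pmf P z *
      ln (pmf P z / (pmf (map_pmf fst P) (fst z) * pmf (map_pmf snd P) (snd z))))"

definition I_S_X1 :: "dist3 \<Rightarrow> real" where
  "I_S_X1 P = mi (map_pmf (\<lambda>(s, x1, x2). (s, x1)) P)"

definition I_S_X2 :: "dist3 \<Rightarrow> real" where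
  "I_S_X2 P = mi (map_pmf (\<lambda>(s, x1, x2). (s, x2)) P)"

definition I_S_X1X2 :: "dist3 \<Rightarrow> real" where
  "I_S_X1X2 P = mi (map_pmf (\<lambda>(s, x1, x2). (s, (x1, x2))) P)"

definition dist_continuous :: "(dist3 \<Rightarrow> real) \<Rightarrow> bool" where
  "dist_continuous F \<longleftrightarrow>
     (\<forall>A Ps P. finite A \<and> (\<forall>n. set_pmf (Ps n) \<subseteq> A) \<and> set_pmf P \<subseteq> A \<and>
        (\<forall>z. (\<lambda>n. pmf (Ps n) z) \<longlonglongrightarrow> pmf P z) \<longrightarrow>
        (\<lambda>n. F (Ps n)) \<longlonglongrightarrow> F P)"

text \<open>Nonnegative bivariate information decomposition (SI, UI1 = UI(S;X1\X2),
  UI2 = UI(S;X2\X1), CI).\<close>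
definition nonneg_PID ::
  "(dist3 \<Rightarrow> real) \<Rightarrow> (dist3 \<Rightarrow> real) \<Rightarrow> (dist3 \<Rightarrow> real) \<Rightarrow> (dist3 \<Rightarrow> real) \<Rightarrow> bool" where
  "nonneg_PID SI UI1 UI2 CI \<longleftrightarrow>
     (\<forall>P. fin_dist P \<longrightarrow>
        SI P \<ge> 0 \<and> UI1 P \<ge> 0 \<and> UI2 P \<ge> 0 \<and> CI P \<ge> 0 \<and>
        I_S_X1X2 P = SI P + CI P + UI1 P + UI2 P \<and>
        I_S_X1 P = SI P + UI1 P \<and>
        I_S_X2 P = SI P + UI2 P) \<and>
     dist_continuous SI \<and> dist_continuous UI1 \<and> dist_continuous UI2 \<and> dist_continuous CI"

definition markov3 :: "dist3 \<Rightarrow> bool" where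
  "markov3 Q \<longleftrightarrow> (\<forall>a b c.
     pmf Q (a, b, c) * pmf (map_pmf (\<lambda>(a, b, c). b) Q) b =
     pmf (map_pmf (\<lambda>(a, b, c). (a, b)) Q) (a, b) * pmf (map_pmf (\<lambda>(a, b, c). (b, c)) Q) (b, c))"

text \<open>The channel S -> X1 is a garbling of S -> X2: there is X1' (finite alphabet) jointly
  distributed with (S,X2) as in P, such that S - X2 - X1' is Markov and P_{S X1'} = P_{S X1}.
  Q is the joint law of (S, X2, X1').\<close>
definition is_garbling :: "dist3 \<Rightarrow> bool" where
  "is_garbling P \<longleftrightarrow> (\<exists>Q::dist3. fin_dist Q \<and>
     map_pmf (\<lambda>(s, x2, y). (s, x2)) Q = map_pmf (\<lambda>(s, x1, x2). (s, x2)) P \<and>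
     markov3 Q \<and>
     map_pmf (\<lambda>(s, x2, y). (s, y)) Q = map_pmf (\<lambda>(s, x1, x2). (s, x1)) P)"

definition blackwell :: "(dist3 \<Rightarrow> real) \<Rightarrow> bool" where
  "blackwell U \<longleftrightarrow> (\<forall>P. fin_dist P \<longrightarrow> (U P = 0 \<longleftrightarrow> is_garbling P))"

definition SIbar :: "(dist3 \<Rightarrow> real) \<Rightarrow> dist3 \<Rightarrow> real" where
  "SIbar SI P = Sup {SI (map_pmf (\<lambda>(s, x1, x2). (f s, x1, x2)) P) | f :: nat \<Rightarrow> nat. True}"

definition UIbar1 :: "(dist3 \<Rightarrow> real) \<Rightarrow> dist3 \<Rightarrow> real" where
  "UIbar1 SI P = I_S_X1 P - SIbar SI P"

definition UIbar2 :: "(dist3 \<Rightarrow> real) \<Rightarrow> dist3 \<Rightarrow> real" where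
  "UIbar2 SI P = I_S_X2 P - SIbar SI P"

end

theory Submission imports Defs begin
lemma group_sum:
  fixes \<phi> :: "'b \<Rightarrow> real"
  assumes "finite (set_pmf R)"
  shows "(\<Sum>z\<in>set_pmf R. pmf R z * \<phi> (h z)) = (\<Sum>w\<in>set_pmf (map_pmf h R). pmf (map_pmf h R) w * \<phi> w)"
proof -
  have "(\<Sum>w\<in>set_pmf (map_pmf h R). pmf (map_pmf h R) w * \<phi> w) = measure_pmf.expectation (map_pmf h R) \<phi>"
    by (subst integral_measure_pmf[of "set_pmf (map_pmf h R)"]) (auto simp: assms)
  also have "\<dots> = measure_pmf.expectation R (\<lambda>z. \<phi> (h z))" by simp
  also have "\<dots> = (\<Sum>z\<in>set_pmf R. pmf R z * \<phi> (h z))"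
    by (subst integral_measure_pmf[of "set_pmf R"]) (auto simp: assms)
  finally show ?thesis ..
qed

lemma marg_sum:
  assumes "finite B" "snd ` set_pmf T \<subseteq> B"
  shows "(\<Sum>x\<in>B. pmf T (t, x)) = pmf (map_pmf fst T) t"
proof -
  have "pmf (map_pmf fst T) t = measure T (fst -` {t})" by (simp add: pmf_map)
  also have "\<dots> = measure T (fst -` {t} \<inter> set_pmf T)" by (simp add: measure_Int_set_pmf)
  also have "fst -` {t} \<inter> set_pmf T = ({t} \<times> B) \<inter> set_pmf T" using assms(2) by force
  also have "measure T \<dots> = measure T ({t} \<times> B)" by (simp add: measure_Int_set_pmf)
  also have "\<dots> = sum (pmf T) ({t} \<times> B)" using assms(1) by (simp add: measure_measure_pmf_finite)
  also have "\<dots> = (\<Sum>x\<in>B. pmf T (t, x))"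
  proof -
    have "{t} \<times> B = Pair t ` B" by auto
    then show ?thesis by (simp add: sum.reindex inj_on_def)
  qed
  finally show ?thesis ..
qed

lemma mi_dpi:
  fixes R :: "('a \<times> 'b) pmf" and g :: "'a \<Rightarrow> 'c"
  assumes fin: "finite (set_pmf R)"
  shows "mi (map_pmf (map_prod g id) R) \<le> mi R"
proof -
  define T where "T = map_pmf (map_prod g id) R"
  define pA where "pA = map_pmf fst R"
  define pB where "pB = map_pmf snd R"
  define pT1 where "pT1 = map_pmf fst T"
  have sT: "map_pmf snd T = pB" unfolding T_def pB_def by (simp add: pmf.map_comp o_def)
  define LT where "LT = (\<lambda>w::'c\<times>'b. ln (pmf T w / (pmf pT1 (fst w) * pmf pB (snd w))))"
  define LR where "LR = (\<lambda>z::'a\<times>'b. ln (pmf R z / (pmf pA (fst z) * pmf pB (snd z))))"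
  define q where "q = (\<lambda>z::'a\<times>'b. pmf pA (fst z) * pmf T (g (fst z), snd z) / pmf pT1 (g (fst z)))"
  have miT: "mi T = (\<Sum>z\<in>set_pmf R. pmf R z * LT (map_prod g id z))"
    unfolding T_def
    by (subst group_sum[OF fin]) (simp add: mi_def LT_def T_def pT1_def sT[unfolded T_def])
  have miR: "mi R = (\<Sum>z\<in>set_pmf R. pmf R z * LR z)"
    by (simp add: mi_def LR_def pA_def pB_def)
  have key: "pmf R z * LR z - pmf R z * LT (map_prod g id z) \<ge> pmf R z - q z"
    if z: "z \<in> set_pmf R" for z
  proof -
    obtain s x where zs: "z = (s, x)" by (cases z)
    have p1: "pmf R z > 0" using z by (simp add: pmf_positive)
    have "s \<in> set_pmf pA" using z zs unfolding pA_def by force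
    then have p2: "pmf pA s > 0" by (simp add: pmf_positive)
    have "x \<in> set_pmf pB" using z zs unfolding pB_def by force
    then have p3: "pmf pB x > 0" by (simp add: pmf_positive)
    have "(g s, x) \<in> set_pmf T" using z zs unfolding T_def by force
    then have p4: "pmf T (g s, x) > 0" by (simp add: pmf_positive)
    have "g s \<in> set_pmf pT1" using \<open>(g s, x) \<in> set_pmf T\<close> unfolding pT1_def by force
    then have p5: "pmf pT1 (g s) > 0" by (simp add: pmf_positive)
    define r where "r = pmf pA s * pmf T (g s, x) / (pmf pT1 (g s) * pmf R z)"
    have rpos: "r > 0" using p1 p2 p4 p5 by (simp add: r_def)
    have "LR z - LT (map_prod g id z) = - ln r"
      using p1 p2 p3 p4 p5 by (simp add: LR_def LT_def r_def zs ln_div ln_mult)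
    moreover have "- ln r \<ge> 1 - r" using ln_le_minus_one[OF rpos] by simp
    ultimately have "LR z - LT (map_prod g id z) \<ge> 1 - r" by simp
    then have "pmf R z * (LR z - LT (map_prod g id z)) \<ge> pmf R z * (1 - r)"
      using p1 by (intro mult_left_mono) auto
    moreover have "pmf R z * (1 - r) = pmf R z - q z"
      using p1 p5 by (simp add: r_def q_def zs field_simps)
    ultimately show ?thesis by (simp add: right_diff_distrib)
  qed
  have s1: "(\<Sum>z\<in>set_pmf R. pmf R z) = 1" using fin by (simp add: sum_pmf_eq_1)
  have finA: "finite (set_pmf pA)" and finB: "finite (set_pmf pB)"
    using fin by (simp_all add: pA_def pB_def)
  have qnn: "q z \<ge> 0" for z by (simp add: q_def)
  have sub: "set_pmf R \<subseteq> set_pmf pA \<times> set_pmf pB"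
    unfolding pA_def pB_def by force
  have "(\<Sum>z\<in>set_pmf R. q z) \<le> (\<Sum>z\<in>set_pmf pA \<times> set_pmf pB. q z)"
    using finA finB sub qnn by (intro sum_mono2) auto
  also have "\<dots> = (\<Sum>s\<in>set_pmf pA. \<Sum>x\<in>set_pmf pB. q (s, x))"
    by (simp add: sum.cartesian_product)
  also have "\<dots> = (\<Sum>s\<in>set_pmf pA. pmf pA s / pmf pT1 (g s) * (\<Sum>x\<in>set_pmf pB. pmf T (g s, x)))"
    by (simp add: q_def sum_distrib_left)
  also have "\<dots> = (\<Sum>s\<in>set_pmf pA. pmf pA s / pmf pT1 (g s) * pmf pT1 (g s))"
  proof (intro sum.cong refl)
    fix s
    have "snd ` set_pmf T \<subseteq> set_pmf pB" unfolding T_def pB_def by force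
    then show "pmf pA s / pmf pT1 (g s) * (\<Sum>x\<in>set_pmf pB. pmf T (g s, x)) = pmf pA s / pmf pT1 (g s) * pmf pT1 (g s)"
      using marg_sum[OF finB, of T "g s"] unfolding pT1_def by simp
  qed
  also have "\<dots> = (\<Sum>s\<in>set_pmf pA. pmf pA s)"
  proof (intro sum.cong refl)
    fix s assume "s \<in> set_pmf pA"
    then have "g s \<in> set_pmf pT1" unfolding pT1_def T_def pA_def by force
    then have "pmf pT1 (g s) > 0" by (simp add: pmf_positive)
    then show "pmf pA s / pmf pT1 (g s) * pmf pT1 (g s) = pmf pA s" by simp
  qed
  also have "\<dots> = 1" using finA by (simp add: sum_pmf_eq_1)
  finally have qs: "(\<Sum>z\<in>set_pmf R. q z) \<le> 1" .
  have "(\<Sum>z\<in>set_pmf R. pmf R z - q z) \<le> (\<Sum>z\<in>set_pmf R. pmf R z * LR z - pmf R z * LT (map_prod g id z))"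
    using key by (intro sum_mono) auto
  then have "(\<Sum>z\<in>set_pmf R. pmf R z) - (\<Sum>z\<in>set_pmf R. q z) \<le> mi R - mi T"
    by (simp add: miR miT sum_subtractf)
  with s1 qs show ?thesis unfolding T_def by simp
qed

lemma mi_eq:
  fixes R :: "('a \<times> 'b) pmf" and g :: "'a \<Rightarrow> 'c"
  assumes fin: "finite (set_pmf R)"
    and cond: "\<And>s x. (s, x) \<in> set_pmf R \<Longrightarrow>
       pmf R (s, x) * pmf (map_pmf g (map_pmf fst R)) (g s) =
       pmf (map_pmf fst R) s * pmf (map_pmf (map_prod g id) R) (g s, x)"
  shows "mi (map_pmf (map_prod g id) R) = mi R"
proof -
  define T where "T = map_pmf (map_prod g id) R"
  define pA where "pA = map_pmf fst R"
  define pB where "pB = map_pmf snd R"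
  define pT1 where "pT1 = map_pmf fst T"
  have sT: "map_pmf snd T = pB" unfolding T_def pB_def by (simp add: pmf.map_comp o_def)
  have fT: "pT1 = map_pmf g pA" unfolding T_def pT1_def pA_def by (simp add: pmf.map_comp o_def)
  define LT where "LT = (\<lambda>w::'c\<times>'b. ln (pmf T w / (pmf pT1 (fst w) * pmf pB (snd w))))"
  define LR where "LR = (\<lambda>z::'a\<times>'b. ln (pmf R z / (pmf pA (fst z) * pmf pB (snd z))))"
  have miT: "mi T = (\<Sum>z\<in>set_pmf R. pmf R z * LT (map_prod g id z))"
    unfolding T_def
    by (subst group_sum[OF fin]) (simp add: mi_def LT_def T_def pT1_def sT[unfolded T_def])
  have miR: "mi R = (\<Sum>z\<in>set_pmf R. pmf R z * LR z)"
    by (simp add: mi_def LR_def pA_def pB_def)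
  have "LT (map_prod g id z) = LR z" if z: "z \<in> set_pmf R" for z
  proof -
    obtain s x where zs: "z = (s, x)" by (cases z)
    have p1: "pmf R z > 0" using z by (simp add: pmf_positive)
    have "s \<in> set_pmf pA" using z zs unfolding pA_def by force
    then have p2: "pmf pA s > 0" by (simp add: pmf_positive)
    have "g s \<in> set_pmf pT1" using z zs unfolding pT1_def T_def by force
    then have p5: "pmf pT1 (g s) > 0" by (simp add: pmf_positive)
    have c: "pmf R (s, x) * pmf pT1 (g s) = pmf pA s * pmf T (g s, x)"
      using cond[of s x] z zs by (simp add: fT pA_def T_def)
    have "pmf T (g s, x) / pmf pT1 (g s) = pmf R (s,x) / pmf pA s"
      using c p2 p5 by (simp add: field_simps)
    then have "pmf T (g s, x) / (pmf pT1 (g s) * pmf pB x) = pmf R (s,x) / (pmf pA s * pmf pB x)"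
      by (metis times_divide_eq_left divide_divide_eq_left)
    then show ?thesis by (simp add: LT_def LR_def zs)
  qed
  then have "mi T = mi R" unfolding miT miR by (intro sum.cong) auto
  then show ?thesis unfolding T_def .
qed

definition Om :: "(nat \<times> nat) set" where
  "Om = {(0,0),(0,1),(1,0),(1,1),(2,0),(2,1)}"

lemma pmf_map_Om: "pmf (map_pmf h (pmf_of_set Om)) y = card (Om \<inter> h -` {y}) / card Om"
  by (simp add: pmf_map measure_pmf_of_set Om_def)

definition P0 :: dist3 where
  "P0 = map_pmf (\<lambda>(s,c). (s, if s = 2 then 0 else c, if s = 1 then 1 else 0)) (pmf_of_set Om)"

definition ff :: "nat \<Rightarrow> nat" where "ff s = (if s = 2 then 1 else 0)"

definition Qg :: "(nat \<Rightarrow> nat) \<Rightarrow> dist3 \<Rightarrow> dist3" where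
  "Qg g P = map_pmf (\<lambda>(s, x1, x2). (g s, x1, x2)) P"

lemma markov_copy: "markov3 (map_pmf (\<lambda>\<omega>. (\<alpha> \<omega>, \<beta> \<omega>, \<beta> \<omega>)) M)"
  unfolding markov3_def
proof (intro allI)
  fix a b c
  let ?Q = "map_pmf (\<lambda>\<omega>. (\<alpha> \<omega>, \<beta> \<omega>, \<beta> \<omega>)) M"
  have e1: "map_pmf (\<lambda>(a, b, c). b) ?Q = map_pmf \<beta> M" by (simp add: pmf.map_comp o_def)
  have e2: "map_pmf (\<lambda>(a, b, c). (a, b)) ?Q = map_pmf (\<lambda>\<omega>. (\<alpha> \<omega>, \<beta> \<omega>)) M"
    by (simp add: pmf.map_comp o_def)
  have e3: "map_pmf (\<lambda>(a, b, c). (b, c)) ?Q = map_pmf (\<lambda>\<omega>. (\<beta> \<omega>, \<beta> \<omega>)) M"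
    by (simp add: pmf.map_comp o_def)
  have v1: "(\<lambda>\<omega>. (\<alpha> \<omega>, \<beta> \<omega>, \<beta> \<omega>)) -` {(a, b, c)} =
      (if c = b then (\<lambda>\<omega>. (\<alpha> \<omega>, \<beta> \<omega>)) -` {(a, b)} else {})" by auto
  have v2: "(\<lambda>\<omega>. (\<beta> \<omega>, \<beta> \<omega>)) -` {(b, c)} = (if c = b then \<beta> -` {b} else {})" by auto
  show "pmf ?Q (a, b, c) * pmf (map_pmf (\<lambda>(a, b, c). b) ?Q) b =
     pmf (map_pmf (\<lambda>(a, b, c). (a, b)) ?Q) (a, b) * pmf (map_pmf (\<lambda>(a, b, c). (b, c)) ?Q) (b, c)"
    unfolding e1 e2 e3 pmf_map v1 v2 by simp
qed

lemma map_SX1_Qg: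
  "map_pmf (\<lambda>(s, x1, x2). (s, x1)) (Qg g P) = map_pmf (map_prod g id) (map_pmf (\<lambda>(s, x1, x2). (s, x1)) P)"
  unfolding Qg_def by (simp add: pmf.map_comp o_def case_prod_beta map_prod_def)

lemma fin_Qg: "fin_dist P \<Longrightarrow> fin_dist (Qg g P)"
  by (simp add: fin_dist_def Qg_def)

lemma fin_P0: "fin_dist P0"
  by (simp add: fin_dist_def P0_def Om_def)

lemma I_eq: "I_S_X1 (Qg ff P0) = I_S_X1 P0"
  unfolding I_S_X1_def map_SX1_Qg
proof (rule mi_eq)
  show "finite (set_pmf (map_pmf (\<lambda>(s, x1, x2). (s, x1)) P0))"
    by (simp add: P0_def Om_def)
  fix s x
  assume "(s, x) \<in> set_pmf (map_pmf (\<lambda>(s, x1, x2). (s, x1)) P0)"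
  then have "(s, x) \<in> {(0,0),(0,1),(1,0),(1,1),(2,0)}"
    by (auto simp: P0_def Om_def)
  then show "pmf (map_pmf (\<lambda>(s, x1, x2). (s, x1)) P0) (s, x) *
       pmf (map_pmf ff (map_pmf fst (map_pmf (\<lambda>(s, x1, x2). (s, x1)) P0))) (ff s) =
       pmf (map_pmf fst (map_pmf (\<lambda>(s, x1, x2). (s, x1)) P0)) s *
       pmf (map_pmf (map_prod ff id) (map_pmf (\<lambda>(s, x1, x2). (s, x1)) P0)) (ff s, x)"
    unfolding P0_def pmf.map_comp pmf_map_Om
    by (auto simp: Om_def ff_def)
qed

lemma garb_Q: "is_garbling (Qg ff P0)"
  unfolding is_garbling_def
proof (intro exI conjI)
  define x2 where "x2 = (\<lambda>s::nat. if s = 1 then 1 else (0::nat))"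
  let ?W = "map_pmf (\<lambda>\<omega>. (ff (fst \<omega>), x2 (fst \<omega>), x2 (fst \<omega>))) (pmf_of_set Om)"
  show "fin_dist ?W" by (simp add: fin_dist_def Om_def)
  show "markov3 ?W" by (rule markov_copy)
  show "map_pmf (\<lambda>(s, x2, y). (s, x2)) ?W = map_pmf (\<lambda>(s, x1, x2). (s, x2)) (Qg ff P0)"
    unfolding Qg_def P0_def pmf.map_comp
    by (intro map_pmf_cong refl) (auto simp: Om_def x2_def)
  define \<sigma> where "\<sigma> = (\<lambda>\<omega>::nat\<times>nat. if \<omega> = (0,1) then (1,0) else if \<omega> = (1,0) then (0,1) else \<omega>)"
  have inj: "inj_on \<sigma> Om" unfolding inj_on_def \<sigma>_def by auto
  have im: "\<sigma> ` Om = Om" unfolding Om_def \<sigma>_def by auto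
  have sig: "map_pmf \<sigma> (pmf_of_set Om) = pmf_of_set Om"
    using map_pmf_of_set_inj[OF inj] im by (simp add: Om_def)
  have "map_pmf (\<lambda>(s, x1, x2). (s, x1)) (Qg ff P0) =
        map_pmf (\<lambda>(s, c). (ff s, if s = 2 then 0 else c)) (pmf_of_set Om)"
    unfolding Qg_def P0_def pmf.map_comp
    by (intro map_pmf_cong refl) (auto simp: Om_def)
  also have "\<dots> = map_pmf (\<lambda>(s, c). (ff s, if s = 2 then 0 else c)) (map_pmf \<sigma> (pmf_of_set Om))"
    by (simp add: sig)
  also have "\<dots> = map_pmf (\<lambda>(s, x2, y). (s, y)) ?W"
    unfolding pmf.map_comp
    by (intro map_pmf_cong refl) (auto simp: Om_def \<sigma>_def x2_def ff_def)
  finally show "map_pmf (\<lambda>(s, x2, y). (s, y)) ?W = map_pmf (\<lambda>(s, x1, x2). (s, x1)) (Qg ff P0)" ..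
qed

lemma not_garb: "\<not> is_garbling P0"
proof
  assume "is_garbling P0"
  then obtain Q :: dist3 where
    hAB: "map_pmf (\<lambda>(s, x2, y). (s, x2)) Q = map_pmf (\<lambda>(s, x1, x2). (s, x2)) P0" and
    mk: "markov3 Q" and
    hAC: "map_pmf (\<lambda>(s, x2, y). (s, y)) Q = map_pmf (\<lambda>(s, x1, x2). (s, x1)) P0"
    unfolding is_garbling_def by blast
  have sAB: "set_pmf (map_pmf (\<lambda>(s, x2, y). (s, x2)) Q) = {(0,0),(1,1),(2,0)}"
    unfolding hAB by (auto simp: P0_def Om_def)
  have sAC: "set_pmf (map_pmf (\<lambda>(s, x2, y). (s, y)) Q) = {(0,0),(0,1),(1,0),(1,1),(2,0)}"
    unfolding hAC by (auto simp: P0_def Om_def)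
  have n1: "(2::nat, 0::nat, 1::nat) \<notin> set_pmf Q"
  proof
    assume "(2, 0, 1) \<in> set_pmf Q"
    then have "(2::nat, 1::nat) \<in> set_pmf (map_pmf (\<lambda>(s, x2, y). (s, y)) Q)" by force
    then show False using sAC by auto
  qed
  have "(2::nat, 0::nat) \<in> set_pmf (map_pmf (\<lambda>(s, x2, y). (s, x2)) Q)" using sAB by auto
  then have p20: "pmf (map_pmf (\<lambda>(s, x2, y). (s, x2)) Q) (2, 0) \<noteq> 0" by (metis set_pmf_iff)
  have "pmf Q (2, 0, 1) = 0" using n1 by (simp add: set_pmf_iff)
  with mk p20 have "pmf (map_pmf (\<lambda>(a, b, c). (b, c)) Q) (0, 1) = 0"
    unfolding markov3_def by (metis (no_types, lifting) mult_eq_0_iff mult_zero_left)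
  then have nbc: "(0::nat, 1::nat) \<notin> set_pmf (map_pmf (\<lambda>(a, b, c). (b, c)) Q)" by (metis set_pmf_iff)
  have "(0::nat, 1::nat) \<in> set_pmf (map_pmf (\<lambda>(s, x2, y). (s, y)) Q)" using sAC by auto
  then obtain b where b: "(0, b, 1) \<in> set_pmf Q" by auto
  then have "(0, b) \<in> set_pmf (map_pmf (\<lambda>(s, x2, y). (s, x2)) Q)" by force
  then have "b = 0" using sAB by auto
  with b have "(b, 1) \<in> set_pmf (map_pmf (\<lambda>(a, b, c). (b, c)) Q)" by force
  with nbc \<open>b = 0\<close> show False by simp
qed

theorem theorem1:
  fixes SI UI1 UI2 CI :: "dist3 \<Rightarrow> real"
  assumes "nonneg_PID SI UI1 UI2 CI"
    and "blackwell UI1"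
  shows "\<not> blackwell (UIbar1 SI)"
proof
  assume bw: "blackwell (UIbar1 SI)"
  have pid: "\<And>P. fin_dist P \<Longrightarrow> UI1 P \<ge> 0 \<and> I_S_X1 P = SI P + UI1 P"
    using assms(1) unfolding nonneg_PID_def by blast
  define S where "S = {SI (map_pmf (\<lambda>(s, x1, x2). (f s, x1, x2)) P0) | f :: nat \<Rightarrow> nat. True}"
  have ub: "y \<le> I_S_X1 P0" if "y \<in> S" for y
  proof -
    obtain f where y: "y = SI (Qg f P0)" using \<open>y \<in> S\<close> unfolding S_def Qg_def by blast
    have fq: "fin_dist (Qg f P0)" using fin_Qg[OF fin_P0] .
    have "y \<le> I_S_X1 (Qg f P0)" using pid[OF fq] y by simp
    also have "I_S_X1 (Qg f P0) \<le> I_S_X1 P0"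
      unfolding I_S_X1_def map_SX1_Qg
      by (rule mi_dpi) (simp add: P0_def Om_def)
    finally show ?thesis .
  qed
  have mem: "I_S_X1 P0 \<in> S"
  proof -
    have fq: "fin_dist (Qg ff P0)" using fin_Qg[OF fin_P0] .
    have "UI1 (Qg ff P0) = 0" using assms(2) fq garb_Q unfolding blackwell_def by blast
    then have "SI (Qg ff P0) = I_S_X1 P0" using pid[OF fq] I_eq by simp
    then show ?thesis unfolding S_def Qg_def by (intro CollectI exI[of _ ff]) simp
  qed
  have "SIbar SI P0 = I_S_X1 P0"
    unfolding SIbar_def S_def[symmetric] using mem ub by (intro cSup_eq_maximum) auto
  then have "UIbar1 SI P0 = 0" by (simp add: UIbar1_def)
  then have "is_garbling P0" using bw fin_P0 unfolding blackwell_def by blast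
  with not_garb show False by simp
qed

end
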